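(* Let $F$ be a subexponential distribution function whose hazard rate $h$ satisfies (H) and is regularly varying of negative index. Let $M>0$, let $K\in B(F,M)$, and let $m\ge0$ be an integer. If $g$ is a (measurable, locally bounded) function with $g(t)=o\big(h(t)^m\overline F(t)\big)$ as $t\to\infty$, then $$\mathsf T_Kg(t)=o\big(h(t)^m\overline F(t)\big)\qquad(t\to\infty).$$
   Context: For a distribution function $K$, $\overline K=1-K$, and $\mathsf M_{-1}K$ is the distribution of $-Y$ when $Y\sim K$. $F$ is subexponential if it is supported on $[0,\infty)$-tails in the sense $\overline{F\star F}(t)\sim2\overline F(t)$ as $t\to\infty$. The hazard rate is $h=F'/\overline F$, assumed to exist for all large $t$. Condition (H): $h$ is regularly varying, $\lim_{t\to\infty}th(t)=+\infty$, $\lim_{t\to\infty}h(t)=0$. For $M>0$, $B(F,M)$ is the set of distribution functions $K$ such that $\overline K(x)\le M\overline F(x)$ and $\overline{\mathsf M_{-1}K}(x)\le M\overline F(x)$ for all $x\ge0$. For a distribution function $K$, the operator $\mathsf T_K$ is defined by $\mathsf T_Kf(t)=\int_{-\infty}^{t/2}f(t-x)\,dK(x)$. *)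

theory Defs
  imports "HOL-Probability.Probability" "HOL-Library.Landau_Symbols"
begin

text \<open>Distribution functions are represented by real probability distributions K
  (locale real_distribution); the distribution function is cdf K, its tail is 1 - cdf K.\<close>

definition tail :: "real measure \<Rightarrow> real \<Rightarrow> real" where
  "tail K x = 1 - cdf K x"

definition reflect :: "real measure \<Rightarrow> real measure" where
  "reflect K = distr K borel uminus"

definition subexponential :: "real measure \<Rightarrow> bool" where
  "subexponential F \<longleftrightarrow> real_distribution F \<and> measure F {..<0} = 0 \<and>
     (\<lambda>t. tail (F \<star> F) t) \<sim>[at_top] (\<lambda>t. 2 * tail F t)"

definition hazard_rate :: "real measure \<Rightarrow> real \<Rightarrow> real" where
  "hazard_rate F t = deriv (cdf F) t / tail F t"

definition regularly_varying :: "(real \<Rightarrow> real) \<Rightarrow> real \<Rightarrow> bool" where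
  "regularly_varying f \<rho> \<longleftrightarrow>
     (\<exists>a. (\<lambda>x. f x * indicator {a..} x) \<in> borel_measurable borel) \<and>
     (\<forall>\<^sub>F x in at_top. f x > 0) \<and>
     (\<forall>c>0. ((\<lambda>x. f (c * x) / f x) \<longlongrightarrow> c powr \<rho>) at_top)"

definition cond_H :: "(real \<Rightarrow> real) \<Rightarrow> bool" where
  "cond_H h \<longleftrightarrow> (\<exists>\<rho>. regularly_varying h \<rho>) \<and>
     filterlim (\<lambda>t. t * h t) at_top at_top \<and> (h \<longlongrightarrow> 0) at_top"

definition B_class :: "real measure \<Rightarrow> real \<Rightarrow> real measure set" where
  "B_class F M = {K. real_distribution K \<and>
     (\<forall>x\<ge>0. tail K x \<le> M * tail F x) \<and> (\<forall>x\<ge>0. tail (reflect K) x \<le> M * tail F x)}"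

definition T_op :: "real measure \<Rightarrow> (real \<Rightarrow> real) \<Rightarrow> real \<Rightarrow> real" where
  "T_op K f t = (LINT x:{..t/2}|K. f (t - x))"

end

theory Submission
  imports Defs
begin


lemma meas_Icc: "a \<le> b \<Longrightarrow> measure lebesgue {a..b::real} = b - a"
  by simp

lemma osc_bound:
  fixes k :: "real \<Rightarrow> real" and R :: real
  assumes kmeas[measurable]: "k \<in> borel_measurable borel"
    and pw: "\<And>u. u \<in> {0..2} \<Longrightarrow> eventually (\<lambda>y. \<bar>k (y + u) - k y\<bar> \<le> R) at_top"
  shows "eventually (\<lambda>y. \<forall>u\<in>{0..1}. \<bar>k (y + u) - k y\<bar> \<le> 2 * R) at_top"
proof (rule ccontr)
  assume "\<not> ?thesis"
  hence "\<forall>n::nat. \<exists>y\<ge>real n. \<exists>u\<in>{0..1}. \<bar>k (y + u) - k y\<bar> > 2 * R"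
    unfolding eventually_at_top_linorder by (auto simp: not_le)
  then obtain xs us where xs: "\<And>n. xs n \<ge> real n" and us: "\<And>n. us n \<in> {0..1}"
    and bad: "\<And>n. \<bar>k (xs n + us n) - k (xs n)\<bar> > 2 * R"
    by metis
  have xs_lim: "filterlim xs at_top sequentially"
    by (rule filterlim_at_top_mono[OF filterlim_real_sequentially]) (use xs in \<open>auto intro!: always_eventually\<close>)
  have xus_lim: "filterlim (\<lambda>n. xs n + us n) at_top sequentially"
    by (rule filterlim_at_top_mono[OF filterlim_real_sequentially]) (use xs us in \<open>auto intro!: always_eventually simp: add_increasing2\<close>)
  define U where "U n = {0..2} \<inter> {y. \<forall>m\<ge>n. \<bar>k (xs m + y) - k (xs m)\<bar> \<le> R}" for n
  define V where "V n = {0..1} \<inter> {y. \<forall>m\<ge>n. \<bar>k (xs m + us m + y) - k (xs m + us m)\<bar> \<le> R}" for n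
  have Uborel: "U n \<in> sets borel" for n unfolding U_def by measurable
  have Vborel: "V n \<in> sets borel" for n unfolding V_def by measurable
  have Uleb: "U n \<in> sets lebesgue" for n using Uborel[of n] by simp
  have Vleb: "V n \<in> sets lebesgue" for n using Vborel[of n] by simp
  have Uinc: "incseq U" unfolding incseq_def U_def by auto
  have Vinc: "incseq V" unfolding incseq_def V_def by auto
  have Uun: "(\<Union>n. U n) = {0..2}"
  proof
    show "{0..2} \<subseteq> (\<Union>n. U n)"
    proof
      fix y :: real assume y: "y \<in> {0..2}"
      have "eventually (\<lambda>n. \<bar>k (xs n + y) - k (xs n)\<bar> \<le> R) sequentially"
        using filterlim_iff[THEN iffD1, OF xs_lim, rule_format, OF pw[OF y]] by (simp add: add.commute)
      then obtain N where "\<forall>m\<ge>N. \<bar>k (xs m + y) - k (xs m)\<bar> \<le> R"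
        unfolding eventually_sequentially by blast
      thus "y \<in> (\<Union>n. U n)" using y unfolding U_def by blast
    qed
  qed (auto simp: U_def)
  have Vun: "(\<Union>n. V n) = {0..1}"
  proof
    show "{0..1} \<subseteq> (\<Union>n. V n)"
    proof
      fix y :: real assume y: "y \<in> {0..1}"
      hence y2: "y \<in> {0..2}" by auto
      have "eventually (\<lambda>n. \<bar>k ((xs n + us n) + y) - k (xs n + us n)\<bar> \<le> R) sequentially"
        using filterlim_iff[THEN iffD1, OF xus_lim, rule_format, OF pw[OF y2]] by simp
      then obtain N where "\<forall>m\<ge>N. \<bar>k (xs m + us m + y) - k (xs m + us m)\<bar> \<le> R"
        unfolding eventually_sequentially by blast
      thus "y \<in> (\<Union>n. V n)" using y unfolding V_def by blast
    qed
  qed (auto simp: V_def)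
  have "(\<lambda>n. measure lebesgue (U n)) \<longlonglongrightarrow> measure lebesgue (\<Union>n. U n)"
    by (rule Lim_measure_incseq) (use Uleb Uinc Uun in \<open>auto simp: emeasure_completion\<close>)
  hence "(\<lambda>n. measure lebesgue (U n)) \<longlonglongrightarrow> 2" using Uun meas_Icc[of 0 2] by simp
  hence ev1: "eventually (\<lambda>n. measure lebesgue (U n) > 3/2) sequentially"
    by (rule order_tendstoD) simp
  have "(\<lambda>n. measure lebesgue (V n)) \<longlonglongrightarrow> measure lebesgue (\<Union>n. V n)"
    by (rule Lim_measure_incseq) (use Vleb Vinc Vun in \<open>auto simp: emeasure_completion\<close>)
  hence "(\<lambda>n. measure lebesgue (V n)) \<longlonglongrightarrow> 1" using Vun meas_Icc[of 0 1] by simp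
  hence ev2: "eventually (\<lambda>n. measure lebesgue (V n) > 1/2) sequentially"
    by (rule order_tendstoD) simp
  obtain n where n1: "measure lebesgue (U n) > 3/2" and n2: "measure lebesgue (V n) > 1/2"
    using eventually_conj[OF ev1 ev2] eventually_sequentially by auto
  define W where "W = (+) (us n) ` V n"
  have Ufm: "U n \<in> lmeasurable"
    by (rule fmeasurableI2[OF lmeasurable_interval(1)[of 0 2]]) (use Uleb in \<open>auto simp: U_def\<close>)
  have Vfm: "V n \<in> lmeasurable"
    by (rule fmeasurableI2[OF lmeasurable_interval(1)[of 0 1]]) (use Vleb in \<open>auto simp: V_def\<close>)
  have Wfm: "W \<in> lmeasurable" unfolding W_def by (rule measurable_translation[OF Vfm])
  have Wm: "measure lebesgue W = measure lebesgue (V n)" unfolding W_def by (rule measure_translation)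
  have Wsub: "W \<subseteq> {0..2}" using us[of n] unfolding W_def V_def by auto
  have UWsub: "U n \<union> W \<subseteq> {0..2}" using Wsub unfolding U_def by auto
  have "measure lebesgue (U n \<union> W) \<le> measure lebesgue {0..2::real}"
    by (rule measure_mono_fmeasurable[OF UWsub]) (use Ufm Wfm in auto)
  hence "measure lebesgue (U n \<union> W) \<le> 2" using meas_Icc[of 0 2] by simp
  moreover have "measure lebesgue (U n \<union> W) = measure lebesgue (U n) + measure lebesgue W - measure lebesgue (U n \<inter> W)"
    by (rule measure_Un3[OF Ufm Wfm])
  ultimately have "measure lebesgue (U n \<inter> W) > 0" using n1 n2 Wm by linarith
  hence "U n \<inter> W \<noteq> {}" by auto
  then obtain v where v: "v \<in> V n" and uv: "us n + v \<in> U n" unfolding W_def by auto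
  have 1: "\<bar>k (xs n + (us n + v)) - k (xs n)\<bar> \<le> R" using uv unfolding U_def by auto
  have 2: "\<bar>k (xs n + us n + v) - k (xs n + us n)\<bar> \<le> R" using v unfolding V_def by auto
  have "\<bar>k (xs n + us n) - k (xs n)\<bar> \<le> 2 * R" using 1 2 by (simp add: add.assoc)
  thus False using bad[of n] by simp
qed

lemma rv_bound:
  fixes f :: "real \<Rightarrow> real"
  assumes rv: "regularly_varying f \<rho>" and neg: "\<rho> < 0"
  shows "\<exists>C>0. \<exists>T>0. \<forall>t\<ge>T. \<forall>s\<ge>t/2. 0 < f s \<and> f s \<le> C * f t"
proof -
  obtain a where meas: "(\<lambda>x. f x * indicator {a..} x) \<in> borel_measurable borel"
    using rv unfolding regularly_varying_def by blast
  obtain a0 where pos: "\<And>x. x \<ge> a0 \<Longrightarrow> f x > 0"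
    using rv unfolding regularly_varying_def eventually_at_top_linorder by blast
  have lim: "\<And>c. c > 0 \<Longrightarrow> ((\<lambda>x. f (c * x) / f x) \<longlongrightarrow> c powr \<rho>) at_top"
    using rv unfolding regularly_varying_def by blast
  define b where "b = max (max a a0) 1"
  have b: "b \<ge> a" "b \<ge> a0" "b \<ge> 1" unfolding b_def by auto
  define k where "k y = ln (f (exp y) * indicator {a..} (exp y))" for y
  have m1: "(\<lambda>y. (\<lambda>x. f x * indicator {a..} x) (exp y)) \<in> borel_measurable borel"
    by (rule measurable_compose[OF _ meas]) simp
  have kmeas: "k \<in> borel_measurable borel"
    unfolding k_def by (rule measurable_compose[OF m1]) simp
  have keq: "k y = ln (f (exp y))" if "y \<ge> ln b" for y
  proof -
    have "exp y \<ge> b" using that b by (metis exp_ln less_le_trans zero_less_one exp_le_cancel_iff)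
    thus ?thesis using b unfolding k_def by (simp add: indicator_def)
  qed
  have fpos: "f (exp y) > 0" if "y \<ge> ln b" for y
  proof -
    have "exp y \<ge> b" using that b by (metis exp_ln less_le_trans zero_less_one exp_le_cancel_iff)
    thus ?thesis using b pos by simp
  qed
  have klim: "((\<lambda>y. k (y + u) - k y) \<longlongrightarrow> \<rho> * u) at_top" for u
  proof -
    have "((\<lambda>x. f (exp u * x) / f x) \<longlongrightarrow> exp u powr \<rho>) at_top" by (rule lim) simp
    hence "((\<lambda>y. f (exp u * exp y) / f (exp y)) \<longlongrightarrow> exp (\<rho> * u)) at_top"
      using filterlim_compose[OF _ exp_at_top] by (simp add: powr_def mult.commute)
    hence "((\<lambda>y. ln (f (exp u * exp y) / f (exp y))) \<longlongrightarrow> ln (exp (\<rho> * u))) at_top"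
      by (rule tendsto_ln) simp
    hence L: "((\<lambda>y. ln (f (exp u * exp y) / f (exp y))) \<longlongrightarrow> \<rho> * u) at_top" by simp
    have ev: "eventually (\<lambda>y. ln (f (exp u * exp y) / f (exp y)) = k (y + u) - k y) at_top"
      using eventually_ge_at_top[of "ln b"] eventually_ge_at_top[of "ln b - u"]
    proof eventually_elim
      case (elim y)
      hence "y + u \<ge> ln b" by simp
      hence p1: "f (exp (y + u)) > 0" and p2: "f (exp y) > 0" and k1: "k (y + u) = ln (f (exp (y + u)))" and k2: "k y = ln (f (exp y))"
        using elim keq fpos by auto
      have "exp u * exp y = exp (y + u)" by (simp add: exp_add[symmetric] add.commute)
      thus ?case using p1 p2 k1 k2 by (simp add: ln_div)
    qed
    show ?thesis using tendsto_cong[OF ev] L by simp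
  qed
  define R where "R = 2 * \<bar>\<rho>\<bar> + 1"
  have pw: "eventually (\<lambda>y. \<bar>k (y + u) - k y\<bar> \<le> R) at_top" if u: "u \<in> {0..2}" for u
  proof -
    have "eventually (\<lambda>y. dist (k (y + u) - k y) (\<rho> * u) < 1) at_top"
      using klim[of u] unfolding tendsto_iff by simp
    thus ?thesis
    proof eventually_elim
      case (elim y)
      have "\<bar>\<rho> * u\<bar> \<le> \<bar>\<rho>\<bar> * 2" using u by (simp add: abs_mult mult_left_mono)
      thus ?case using elim unfolding R_def dist_real_def by linarith
    qed
  qed
  have osc: "eventually (\<lambda>y. \<forall>u\<in>{0..1}. \<bar>k (y + u) - k y\<bar> \<le> 2 * R) at_top"
    by (rule osc_bound[OF kmeas pw])
  have step: "eventually (\<lambda>y. k (y + 1) - k y < 0) at_top"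
    using order_tendstoD(2)[OF klim[of 1], of 0] neg by simp
  obtain Y where Y: "\<And>y. y \<ge> Y \<Longrightarrow> (\<forall>u\<in>{0..1}. \<bar>k (y + u) - k y\<bar> \<le> 2 * R) \<and> k (y + 1) - k y < 0 \<and> y \<ge> ln b"
    using eventually_conj[OF eventually_conj[OF osc step] eventually_ge_at_top[of "ln b"]]
    unfolding eventually_at_top_linorder by blast
  have mono: "k (z + real n) \<le> k z" if "z \<ge> Y" for z n
  proof (induction n)
    case (Suc n)
    have "k (z + real n + 1) < k (z + real n)" using Y[of "z + real n"] that by simp
    moreover have "z + real (Suc n) = z + real n + 1" by simp
    ultimately show ?case using Suc by (metis less_imp_le order_trans)
  qed simp
  have main: "k (y + v) \<le> k y + 2 * R" if y: "y \<ge> Y + 1" and v: "v \<ge> -1" for y v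
  proof (cases "v \<le> 0")
    case True
    have "y + v \<ge> Y" using y v by simp
    moreover have "- v \<in> {0..1}" using v True by simp
    ultimately have "\<bar>k (y + v + - v) - k (y + v)\<bar> \<le> 2 * R" using Y[of "y + v"] by blast
    thus ?thesis by simp
  next
    case False
    define n where "n = nat \<lfloor>v\<rfloor>"
    define u where "u = v - real n"
    have n: "real n = of_int \<lfloor>v\<rfloor>" using False unfolding n_def by simp
    have u: "u \<in> {0..1}" unfolding u_def n using frac_lt_1[of v] frac_ge_0[of v] by (auto simp: frac_def)
    have 1: "k (y + u) \<le> k y + 2 * R" using Y[of y] u y by force
    have 2: "k (y + u + real n) \<le> k (y + u)" by (rule mono) (use y u in auto)
    have "y + v = y + u + real n" unfolding u_def by simp
    thus ?thesis using 1 2 by (metis order_trans)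
  qed
  show ?thesis
  proof (intro exI conjI allI impI)
    show "exp (2 * R) > 0" by simp
    show "exp (Y + 1) > 0" by simp
    fix t s assume t: "exp (Y + 1) \<le> t" and s: "t / 2 \<le> s"
    have tpos: "t > 0" using t by (meson exp_gt_zero less_le_trans)
    have spos: "s > 0" using tpos s by simp
    have lt: "ln t \<ge> Y + 1" using t tpos by (metis exp_le_cancel_iff exp_ln)
    have "ln s \<ge> ln (t / 2)" using s tpos by simp
    hence ls: "ln s \<ge> ln t - 1" using ln_div[of t 2] tpos ln_2_less_1 by simp
    have kk: "k (ln t + (ln s - ln t)) \<le> k (ln t) + 2 * R" by (rule main) (use lt ls in auto)
    have lsY: "ln s \<ge> Y" using lt ls by simp
    have "f s = f (exp (ln s))" using spos by simp
    moreover have "f t = f (exp (ln t))" using tpos by simp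
    ultimately have fs: "f s > 0" and ft: "f t > 0" using fpos[of "ln s"] fpos[of "ln t"] Y[OF lsY] Y[of "ln t"] lt by auto
    show "0 < f s" by (rule fs)
    have "ln (f s) \<le> ln (f t) + 2 * R" using kk keq[of "ln s"] keq[of "ln t"] Y[OF lsY] Y[of "ln t"] lt spos tpos by simp
    hence "exp (ln (f s)) \<le> exp (ln (f t) + 2 * R)" by simp
    thus "f s \<le> exp (2 * R) * f t" using fs ft by (simp add: exp_add mult.commute)
  qed
qed

lemma tail_emeasure:
  assumes "real_distribution P"
  shows "ennreal (tail P s) = emeasure P {s<..}"
proof -
  interpret P: real_distribution P by fact
  have "{s<..} = space P - {..s}" by (auto simp: P.borel_UNIV)
  hence "measure P {s<..} = 1 - measure P {..s}" using P.prob_compl[of "{..s}"] by simp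
  thus ?thesis unfolding tail_def cdf_def by (simp add: P.emeasure_eq_measure)
qed

lemma conv_real_dist:
  assumes "real_distribution P" "real_distribution Q"
  shows "real_distribution (P \<star> Q)"
proof -
  interpret P: real_distribution P by fact
  interpret Q: real_distribution Q by fact
  interpret PQ: pair_prob_space P Q ..
  have "prob_space (P \<star> Q)"
    unfolding convolution_def by (rule PQ.prob_space_distr) simp
  thus ?thesis unfolding real_distribution_def real_distribution_axioms_def by simp
qed

lemma conv_bound:
  assumes F: "real_distribution F" and K: "real_distribution K" and Mnn: "M \<ge> 0"
    and KB: "\<forall>x\<ge>0. tail K x \<le> M * tail F x"
  shows "(\<integral>\<^sup>+x. ennreal (tail F (t - x)) \<partial>K) \<le> ennreal (tail F t) + ennreal M * ennreal (tail (F \<star> F) t)"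
proof -
  interpret F: real_distribution F by fact
  interpret K: real_distribution K by fact
  have fF: "finite_measure F" and fK: "finite_measure K" by unfold_locales
  have "(\<integral>\<^sup>+x. ennreal (tail F (t - x)) \<partial>K) = (\<integral>\<^sup>+x. emeasure F {a. a + x \<in> {t<..}} \<partial>K)"
  proof (rule nn_integral_cong)
    fix x
    have "{a. a + x \<in> {t<..}} = {t - x<..}" by auto
    thus "ennreal (tail F (t - x)) = emeasure F {a. a + x \<in> {t<..}}" using tail_emeasure[OF F] by simp
  qed
  also have "\<dots> = emeasure (K \<star> F) {t<..}"
    by (rule convolution_emeasure[symmetric]) (auto simp: fF fK F.borel_UNIV K.borel_UNIV)
  also have "\<dots> = emeasure (F \<star> K) {t<..}"
    by (subst convolution_commutative) (auto simp: fF fK)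
  also have "\<dots> = (\<integral>\<^sup>+y. emeasure K {a. a + y \<in> {t<..}} \<partial>F)"
    by (rule convolution_emeasure) (auto simp: fF fK F.borel_UNIV K.borel_UNIV)
  also have "\<dots> \<le> (\<integral>\<^sup>+y. indicator {t<..} y + ennreal M * emeasure F {a. a + y \<in> {t<..}} \<partial>F)"
  proof (rule nn_integral_mono)
    fix y
    show "emeasure K {a. a + y \<in> {t<..}} \<le> indicator {t<..} y + ennreal M * emeasure F {a. a + y \<in> {t<..}}"
    proof (cases "y > t")
      case True
      have "emeasure K {a. a + y \<in> {t<..}} \<le> 1" by (rule K.emeasure_le_1)
      thus ?thesis using True by (simp add: add_increasing2)
    next
      case False
      have eq: "{a. a + y \<in> {t<..}} = {t - y<..}" by auto
      have "tail K (t - y) \<le> M * tail F (t - y)" using KB False by simp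
      moreover have "tail F (t - y) \<ge> 0" unfolding tail_def using F.cdf_bounded_prob by simp
      ultimately have "ennreal (tail K (t - y)) \<le> ennreal M * ennreal (tail F (t - y))"
        using Mnn by (simp add: ennreal_mult[symmetric] ennreal_leI)
      thus ?thesis using False eq tail_emeasure[OF K] tail_emeasure[OF F] by simp
    qed
  qed
  also have "\<dots> = emeasure F {t<..} + ennreal M * (\<integral>\<^sup>+y. emeasure F {a. a + y \<in> {t<..}} \<partial>F)"
    by (subst nn_integral_add) (auto simp: nn_integral_cmult F.borel_UNIV)
  also have "(\<integral>\<^sup>+y. emeasure F {a. a + y \<in> {t<..}} \<partial>F) = emeasure (F \<star> F) {t<..}"
    by (rule convolution_emeasure[symmetric]) (auto simp: fF F.borel_UNIV)
  finally show ?thesis using tail_emeasure[OF F] tail_emeasure[OF conv_real_dist[OF F F]] by simp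
qed

theorem lemma4p2p2:
  fixes F K :: "real measure" and M \<rho> :: real and m :: nat and g :: "real \<Rightarrow> real"
  assumes subexp: "subexponential F"
    and deriv_ex: "\<forall>\<^sub>F t in at_top. cdf F differentiable at t"
    and H: "cond_H (hazard_rate F)"
    and rv: "regularly_varying (hazard_rate F) \<rho>" and neg: "\<rho> < 0"
    and Mpos: "M > 0"
    and KB: "K \<in> B_class F M"
    and g_meas: "g \<in> borel_measurable borel"
    and g_locbdd: "\<And>S. compact S \<Longrightarrow> bounded (g ` S)"
    and g_small: "g \<in> o[at_top](\<lambda>t. hazard_rate F t ^ m * tail F t)"
  shows "T_op K g \<in> o[at_top](\<lambda>t. hazard_rate F t ^ m * tail F t)"
proof -
  define h where "h = hazard_rate F"
  have Fd: "real_distribution F" using subexp unfolding subexponential_def by blast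
  have Kd: "real_distribution K" using KB unfolding B_class_def by blast
  have KBt: "\<forall>x\<ge>0. tail K x \<le> M * tail F x" using KB unfolding B_class_def by blast
  interpret F: real_distribution F by (rule Fd)
  interpret K: real_distribution K by (rule Kd)
  have tail_nn: "tail F s \<ge> 0" for s unfolding tail_def using F.cdf_bounded_prob by simp
  obtain C T1 where C: "C > 0" and T1: "T1 > 0"
    and hb: "\<And>t s. t \<ge> T1 \<Longrightarrow> s \<ge> t / 2 \<Longrightarrow> 0 < h s \<and> h s \<le> C * h t"
    using rv_bound[OF rv neg] unfolding h_def by blast
  have "(\<lambda>t. tail (F \<star> F) t) \<in> O[at_top](\<lambda>t. 2 * tail F t)"
    using subexp unfolding subexponential_def by (blast intro: asymp_equiv_imp_bigo)
  then obtain c2 where c2: "c2 > 0" and ev2: "eventually (\<lambda>t. norm (tail (F \<star> F) t) \<le> c2 * norm (2 * tail F t)) at_top"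
    by (rule landau_o.bigE)
  define D where "D = 1 + M * (2 * c2)"
  have Dpos: "D > 0" unfolding D_def using Mpos c2 by (simp add: add_pos_nonneg)
  show ?thesis
  proof (rule landau_o.smallI)
    fix c :: real assume c: "c > 0"
    define \<epsilon> where "\<epsilon> = c / (C ^ m * D)"
    have eps: "\<epsilon> > 0" unfolding \<epsilon>_def using c C Dpos by simp
    have evg: "eventually (\<lambda>s. norm (g s) \<le> \<epsilon> * norm (h s ^ m * tail F s)) at_top"
      using landau_o.smallD[OF g_small eps] unfolding h_def by simp
    obtain T0 where T0: "\<And>s. s \<ge> T0 \<Longrightarrow> norm (g s) \<le> \<epsilon> * norm (h s ^ m * tail F s)"
      using evg unfolding eventually_at_top_linorder by blast
    obtain T2 where T2: "\<And>t. t \<ge> T2 \<Longrightarrow> norm (tail (F \<star> F) t) \<le> c2 * norm (2 * tail F t)"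
      using ev2 unfolding eventually_at_top_linorder by blast
    have "eventually (\<lambda>t. norm (T_op K g t) \<le> c * norm (h t ^ m * tail F t)) at_top"
      using eventually_ge_at_top[of "max (max (2 * T0) T1) T2"]
    proof eventually_elim
      case (elim t)
      hence t0: "t \<ge> 2 * T0" and t1: "t \<ge> T1" and t2: "t \<ge> T2" by auto
      have htpos: "h t > 0" using hb[OF t1, of t] t1 T1 by simp
      define A where "A = \<epsilon> * C ^ m * h t ^ m"
      have Ann: "A \<ge> 0" unfolding A_def using eps C htpos by simp
      have ptw: "norm (indicator {..t/2} x *\<^sub>R g (t - x)) \<le> A * (indicator {..t/2} x * tail F (t - x))" for x
      proof (cases "x \<le> t / 2")
        case True
        hence s1: "t - x \<ge> T0" and s2: "t - x \<ge> t / 2" using t0 by auto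
        have hs: "0 < h (t - x)" "h (t - x) \<le> C * h t" using hb[OF t1 s2] by auto
        have "norm (g (t - x)) \<le> \<epsilon> * (h (t - x) ^ m * tail F (t - x))"
          using T0[OF s1] hs tail_nn by (simp add: abs_mult)
        also have "\<dots> \<le> \<epsilon> * ((C * h t) ^ m * tail F (t - x))"
          using hs eps tail_nn by (intro mult_left_mono mult_right_mono power_mono) auto
        also have "\<dots> = A * tail F (t - x)" unfolding A_def by (simp add: power_mult_distrib)
        finally show ?thesis using True by simp
      qed (simp add: indicator_def)
      have Tdef: "T_op K g t = integral\<^sup>L K (\<lambda>x. indicator {..t/2} x *\<^sub>R g (t - x))"
        unfolding T_op_def set_lebesgue_integral_def by simp
      have bound: "norm (T_op K g t) \<le> A * (D * tail F t)"
      proof (cases "integrable K (\<lambda>x. indicator {..t/2} x *\<^sub>R g (t - x))")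
        case False
        thus ?thesis unfolding Tdef using Ann Dpos tail_nn by (simp add: not_integrable_integral_eq)
      next
        case True
        have "ennreal (norm (T_op K g t)) \<le> (\<integral>\<^sup>+x. ennreal (norm (indicator {..t/2} x *\<^sub>R g (t - x))) \<partial>K)"
          unfolding Tdef by (rule integral_norm_bound_ennreal[OF True])
        also have "\<dots> \<le> (\<integral>\<^sup>+x. ennreal A * ennreal (tail F (t - x)) \<partial>K)"
        proof (rule nn_integral_mono)
          fix x
          have "A * (indicator {..t/2} x * tail F (t - x)) \<le> A * tail F (t - x)"
            using Ann tail_nn by (intro mult_left_mono) (auto simp: indicator_def)
          hence "norm (indicator {..t/2} x *\<^sub>R g (t - x)) \<le> A * tail F (t - x)" using ptw[of x] by linarith
          thus "ennreal (norm (indicator {..t/2} x *\<^sub>R g (t - x))) \<le> ennreal A * ennreal (tail F (t - x))"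
            using Ann tail_nn by (simp add: ennreal_mult[symmetric] ennreal_leI)
        qed
        also have "\<dots> = ennreal A * (\<integral>\<^sup>+x. ennreal (tail F (t - x)) \<partial>K)"
        proof (rule nn_integral_cmult)
          have "mono (cdf F)" by (simp add: mono_def F.cdf_nondecreasing)
          hence cm[measurable]: "cdf F \<in> borel_measurable borel" by (rule borel_measurable_mono)
          have "(\<lambda>x. cdf F (t - x)) \<in> borel_measurable borel" by measurable
          hence m2: "(\<lambda>x. ennreal (tail F (t - x))) \<in> borel_measurable borel"
            unfolding tail_def by measurable
          show "(\<lambda>x. ennreal (tail F (t - x))) \<in> borel_measurable K"
            by (subst measurable_cong_sets[OF K.events_eq_borel refl]) (rule m2)
        qed
        also have "\<dots> \<le> ennreal A * (ennreal (tail F t) + ennreal M * ennreal (tail (F \<star> F) t))"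
          by (intro mult_left_mono conv_bound[OF Fd Kd _ KBt]) (use Mpos in auto)
        also have "\<dots> \<le> ennreal A * ennreal (D * tail F t)"
        proof (intro mult_left_mono) 
          have tt: "tail (F \<star> F) t \<le> 2 * c2 * tail F t" using T2[OF t2] tail_nn by simp
          have "tail (F \<star> F) t \<ge> 0" unfolding tail_def
            using real_distribution.cdf_bounded_prob[OF conv_real_dist[OF Fd Fd]] by simp
          hence "ennreal (tail F t) + ennreal M * ennreal (tail (F \<star> F) t) = ennreal (tail F t + M * tail (F \<star> F) t)"
            using Mpos tail_nn by (simp add: ennreal_mult[symmetric] ennreal_plus)
          also have "\<dots> \<le> ennreal (D * tail F t)"
            unfolding D_def using tt Mpos by (intro ennreal_leI) (simp add: algebra_simps mult_left_mono)
          finally show "ennreal (tail F t) + ennreal M * ennreal (tail (F \<star> F) t) \<le> ennreal (D * tail F t)" .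
        qed simp
        also have "\<dots> = ennreal (A * (D * tail F t))" using Ann Dpos tail_nn[of t] by (simp add: ennreal_mult)
        finally show ?thesis using Ann Dpos tail_nn by (simp add: ennreal_le_iff)
      qed
      also have "A * (D * tail F t) = c * (h t ^ m * tail F t)"
        unfolding A_def \<epsilon>_def using C Dpos by (simp add: field_simps)
      also have "\<dots> = c * norm (h t ^ m * tail F t)" using htpos tail_nn by (simp add: abs_mult)
      finally show ?case .
    qed
    thus "eventually (\<lambda>t. norm (T_op K g t) \<le> c * norm (hazard_rate F t ^ m * tail F t)) at_top"
      unfolding h_def .
  qed
qed
end
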